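(* Let $k\ge 2$ be an integer and $a>0$. Let $L=L_a$ be the $k\times k$ lower bidiagonal matrix with all diagonal entries equal to $a$, all entries directly below the diagonal equal to $-a$, and all other entries $0$. (This is the reduced graph Laplacian of the hierarchical-leadership flock $[0,1,\dots,k]$ in which each agent $i>0$ is led only by agent $i-1$, at an instant when $a_{i,i-1}=a$ for all $i>0$.) Then the smallest eigenvalue of $L$ is $\xi=a$, but there exists no inner product $\langle\cdot,\cdot\rangle$ on $\mathbb{R}^k$ such that \[\langle Lv,v\rangle\ge a\langle v,v\rangle\qquad\text{for all } v\in\mathbb{R}^k.\]
   Context: The reduced Laplacian of a flock $[0,1,\dots,k]$ with connectivity coefficients $a_{ij}\ge 0$ is the restriction of $D-K$ (with $K=(a_{ij})_{0\le i,j\le k}$, $D=\mathrm{diag}(d_0,\dots,d_k)$, $d_i=\sum_j a_{ij}$) to the coordinates $1,\dots,k$; for the chain described in the claim it is exactly the matrix $L_a$ given there. *)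

theory Defs
  imports "Jordan_Normal_Form.Matrix" "Jordan_Normal_Form.Char_Poly"
begin

definition L_mat :: "nat \<Rightarrow> real \<Rightarrow> real mat" where
  "L_mat k a = mat k k (\<lambda>(i, j). if i = j then a else if i = Suc j then - a else 0)"

definition is_inner_product :: "nat \<Rightarrow> (real vec \<Rightarrow> real vec \<Rightarrow> real) \<Rightarrow> bool" where
  "is_inner_product k ip \<longleftrightarrow>
     (\<forall>u \<in> carrier_vec k. \<forall>v \<in> carrier_vec k. \<forall>w \<in> carrier_vec k. \<forall>c.
        ip (u + v) w = ip u w + ip v w \<and> ip (c \<cdot>\<^sub>v u) w = c * ip u w \<and> ip u v = ip v u) \<and>
     (\<forall>v \<in> carrier_vec k. v \<noteq> 0\<^sub>v k \<longrightarrow> ip v v > 0)"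

end

theory Submission
  imports Defs
begin

definition M_mat :: "nat \<Rightarrow> 'a::comm_ring_1 \<Rightarrow> 'a mat" where
  "M_mat k a = mat k k (\<lambda>(i, j). if i = j then a else if i = Suc j then - a else 0)"

lemma L_M: "L_mat k a = M_mat k a"
  unfolding L_mat_def M_mat_def by simp

lemma L_M_c: "map_mat complex_of_real (L_mat k a) = M_mat k (complex_of_real a)"
  unfolding L_mat_def M_mat_def by (rule eq_matI) auto

lemma M_mult:
  assumes "v \<in> carrier_vec k" "i < k"
  shows "(M_mat k a *\<^sub>v v) $ i = a * v $ i - (if i = 0 then 0 else a * v $ (i - 1))"
proof -
  have "(M_mat k a *\<^sub>v v) $ i = (\<Sum>j<k. (if i = j then a else if i = Suc j then - a else 0) * v $ j)"
    using assms unfolding M_mat_def mult_mat_vec_def scalar_prod_def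
    by (auto simp: lessThan_atLeast0 intro!: sum.cong)
  also have "\<dots> = (\<Sum>j<k. (if i = j then a * v $ j else 0)) + (\<Sum>j<k. (if i = Suc j then - a * v $ j else 0))"
    by (subst sum.distrib[symmetric], rule sum.cong) auto
  also have "(\<Sum>j<k. (if i = j then a * v $ j else 0)) = a * v $ i"
    using assms(2) by (simp add: sum.delta)
  also have "(\<Sum>j<k. (if i = Suc j then - a * v $ j else 0)) = (if i = 0 then 0 else - a * v $ (i - 1))"
  proof (cases i)
    case 0 then show ?thesis by simp
  next
    case (Suc m)
    have "(\<Sum>j<k. (if i = Suc j then - a * v $ j else 0)) = (\<Sum>j<k. (if m = j then - a * v $ j else 0))"
      using Suc by (intro sum.cong) auto
    also have "\<dots> = - a * v $ m" using Suc assms(2) by (simp add: sum.delta)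
    finally show ?thesis using Suc by simp
  qed
  finally show ?thesis by simp
qed

lemma M_dim: "M_mat k a \<in> carrier_mat k k" unfolding M_mat_def by simp

lemma eig_a: assumes "k \<ge> 1" shows "eigenvalue (M_mat k (a::'a::comm_ring_1)) a"
proof -
  define v where "v = (unit_vec k (k - 1) :: 'a vec)"
  have vc: "v \<in> carrier_vec k" unfolding v_def by simp
  have "M_mat k a *\<^sub>v v = a \<cdot>\<^sub>v v"
  proof (rule eq_vecI)
    fix i assume "i < dim_vec (a \<cdot>\<^sub>v v)"
    then have i: "i < k" using vc by simp
    show "(M_mat k a *\<^sub>v v) $ i = (a \<cdot>\<^sub>v v) $ i"
      using M_mult[OF vc i, of a] i assms unfolding v_def by auto
  qed (use vc in \<open>auto simp: M_mat_def\<close>)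
  moreover have "v \<noteq> 0\<^sub>v k"
  proof
    assume "v = 0\<^sub>v k"
    then have "v $ (k-1) = 0" using assms by simp
    then show False using assms unfolding v_def by simp
  qed
  ultimately show ?thesis unfolding eigenvalue_def eigenvector_def using vc M_dim[of k a]
    by auto
qed

lemma eig_only: assumes "eigenvalue (M_mat k (a::'a::idom)) mu" shows "mu = a"
proof -
  obtain v where vc: "v \<in> carrier_vec k" and nz: "v \<noteq> 0\<^sub>v k" and ev: "M_mat k a *\<^sub>v v = mu \<cdot>\<^sub>v v"
    using assms M_dim[of k a] unfolding eigenvalue_def eigenvector_def by auto
  have "\<exists>i<k. v $ i \<noteq> 0"
  proof (rule ccontr)
    assume "\<not> ?thesis"
    then have "v = 0\<^sub>v k" using vc by (intro eq_vecI) auto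
    then show False using nz by simp
  qed
  then obtain i0 where "i0 < k" "v $ i0 \<noteq> 0" by auto
  define i where "i = (LEAST i. i < k \<and> v $ i \<noteq> 0)"
  have ik: "i < k" and vi: "v $ i \<noteq> 0"
    using LeastI[of "\<lambda>i. i < k \<and> v $ i \<noteq> 0" i0] \<open>i0 < k\<close> \<open>v $ i0 \<noteq> 0\<close> unfolding i_def by auto
  have prev: "i \<noteq> 0 \<Longrightarrow> v $ (i - 1) = 0"
  proof (rule ccontr)
    assume "i \<noteq> 0" "v $ (i - 1) \<noteq> 0"
    then have "i \<le> i - 1" unfolding i_def using ik
      by (intro Least_le) (simp add: i_def)
    then show False using \<open>i \<noteq> 0\<close> by simp
  qed
  have "(M_mat k a *\<^sub>v v) $ i = a * v $ i" using M_mult[OF vc ik, of a] prev by auto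
  moreover have "(M_mat k a *\<^sub>v v) $ i = mu * v $ i" using ev ik vc by simp
  ultimately have "(mu - a) * v $ i = 0" by (simp add: algebra_simps)
  then show ?thesis using vi by simp
qed

theorem theorem1:
  fixes k :: nat and a :: real
  assumes "k \<ge> 2" and "a > 0"
  shows "(eigenvalue (map_mat complex_of_real (L_mat k a)) (complex_of_real a) \<and>
          (\<forall>mu. eigenvalue (map_mat complex_of_real (L_mat k a)) mu \<longrightarrow> mu \<in> \<real> \<and> a \<le> Re mu)) \<and>
         \<not> (\<exists>ip. is_inner_product k ip \<and>
               (\<forall>v \<in> carrier_vec k. ip (L_mat k a *\<^sub>v v) v \<ge> a * ip v v))"
proof (intro conjI)
  show "eigenvalue (map_mat complex_of_real (L_mat k a)) (complex_of_real a)"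
    unfolding L_M_c using assms by (intro eig_a) simp
  show "\<forall>mu. eigenvalue (map_mat complex_of_real (L_mat k a)) mu \<longrightarrow> mu \<in> \<real> \<and> a \<le> Re mu"
    unfolding L_M_c using eig_only by fastforce
  show "\<not> (\<exists>ip. is_inner_product k ip \<and>
               (\<forall>v \<in> carrier_vec k. ip (L_mat k a *\<^sub>v v) v \<ge> a * ip v v))"
  proof
    assume "\<exists>ip. is_inner_product k ip \<and> (\<forall>v \<in> carrier_vec k. ip (L_mat k a *\<^sub>v v) v \<ge> a * ip v v)"
    then obtain ip where ipd: "is_inner_product k ip"
      and H: "\<forall>v \<in> carrier_vec k. ip (L_mat k a *\<^sub>v v) v \<ge> a * ip v v" by blast
    have add: "\<And>u v w. u \<in> carrier_vec k \<Longrightarrow> v \<in> carrier_vec k \<Longrightarrow> w \<in> carrier_vec k \<Longrightarrow> ip (u + v) w = ip u w + ip v w"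
      and smul: "\<And>u w c. u \<in> carrier_vec k \<Longrightarrow> w \<in> carrier_vec k \<Longrightarrow> ip (c \<cdot>\<^sub>v u) w = c * ip u w"
      and sym: "\<And>u w. u \<in> carrier_vec k \<Longrightarrow> w \<in> carrier_vec k \<Longrightarrow> ip u w = ip w u"
      and pos: "\<And>v. v \<in> carrier_vec k \<Longrightarrow> v \<noteq> 0\<^sub>v k \<Longrightarrow> ip v v > 0"
      using ipd unfolding is_inner_product_def by blast+
    define u where "u = (unit_vec k (k - 2) :: real vec)"
    define w where "w = (unit_vec k (k - 1) :: real vec)"
    have uc: "u \<in> carrier_vec k" and wc: "w \<in> carrier_vec k" unfolding u_def w_def by auto
    have wnz: "w \<noteq> 0\<^sub>v k"
    proof
      assume "w = 0\<^sub>v k"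
      then have "w $ (k-1) = 0" using assms by simp
      then show False using assms unfolding w_def by simp
    qed
    have ww: "ip w w > 0" using pos[OF wc wnz] .
    define t where "t = 1 - ip w u / ip w w"
    define v where "v = u + t \<cdot>\<^sub>v w"
    have vc: "v \<in> carrier_vec k" unfolding v_def using uc wc by simp
    have Lv: "L_mat k a *\<^sub>v v = a \<cdot>\<^sub>v v + (- a) \<cdot>\<^sub>v w"
    proof (rule eq_vecI)
      fix i assume "i < dim_vec (a \<cdot>\<^sub>v v + (- a) \<cdot>\<^sub>v w)"
      then have i: "i < k" using vc wc by simp
      have h: "(L_mat k a *\<^sub>v v) $ i = a * v $ i - (if i = 0 then 0 else a * v $ (i - 1))"
        unfolding L_M using M_mult[OF vc i] .
      show "(L_mat k a *\<^sub>v v) $ i = (a \<cdot>\<^sub>v v + (- a) \<cdot>\<^sub>v w) $ i"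
        unfolding h using i assms vc wc
        by (cases "i = k-1"; cases "i = k-2") (auto simp: v_def u_def w_def algebra_simps)
    qed (use vc wc in \<open>auto simp: L_mat_def\<close>)
    have "ip (L_mat k a *\<^sub>v v) v = a * ip v v - a * ip w v"
      unfolding Lv using add[of "a \<cdot>\<^sub>v v" "(- a) \<cdot>\<^sub>v w" v] smul vc wc by simp
    with H vc have "a * ip w v \<le> 0" by force
    then have le: "ip w v \<le> 0" using assms(2) by (simp add: mult_le_0_iff)
    have "ip w v = ip v w" using sym vc wc by simp
    also have "\<dots> = ip u w + t * ip w w" unfolding v_def using add[of u "t \<cdot>\<^sub>v w" w] smul uc wc by simp
    also have "\<dots> = ip w u + t * ip w w" using sym uc wc by simp
    also have "\<dots> = ip w w" unfolding t_def using ww by (simp add: field_simps)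
    finally show False using le ww by simp
  qed
qed

end
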